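(* Consider a rooted search tree in which every internal node has exactly $b\ge 1$ children and every leaf is at depth $d$. For each internal node $S$ and each action $A$ available at $S$, let $P_{\textrm{best}}(A\mid S)\in[0,1]$ with $\sum_{A} P_{\textrm{best}}(A\mid S)=1$ over the $b$ actions at $S$; these values become known only when $S$ is explored. Let $P_{\textrm{uni}}=1/b$. Given a set $\mathcal{E}$ of explored internal nodes, define for each leaf $\hat S$ with root-to-leaf path $S_0\xrightarrow{A_0}S_1\xrightarrow{A_1}\cdots\xrightarrow{A_{d-1}}S_d=\hat S$ $$P_{\textrm{opt}}(\hat S)=\prod_{k:\,S_k\in\mathcal{E}} P_{\textrm{best}}(A_k\mid S_k)\cdot\prod_{k:\,S_k\notin\mathcal{E},\,0\le k\le d-1} P_{\textrm{uni}} .$$ Suppose initially no node is explored, and run the greedy procedure: starting at the root, explore the current state $S$ and move along an action $A$ maximizing $P_{\textrm{best}}(A\mid S)$, repeating until a leaf is reached. Then the greedy procedure explores at most $d$ nodes, and the leaf it reaches maximizes $P_{\textrm{opt}}(\hat S)$ over all leaves $\hat S$, where $P_{\textrm{opt}}$ is computed with $\mathcal{E}$ equal to the set of nodes explored by the greedy procedure.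
   Context: A search problem is modelled as a tree whose nodes are states and edges are actions; each root-to-leaf path (leaf) is a candidate solution. $P_{\textrm{best}}(A\mid S)$ is the probability that the optimal candidate solution in the subtree rooted at $S$ lies in the subtree reached by taking action $A$ from $S$. The standing modelling assumptions are: in unexplored parts of the tree the action probabilities are taken to be uniform, equal to $P_{\textrm{uni}}=1/b$; the depth $d$ of the tree is uniform and known; the branching factor $b$ is constant and known. $P_{\textrm{opt}}(\hat S)$ is the (estimated) probability that candidate solution $\hat S$ is the optimal one. *)

theory Defs
  imports Complex_Main
begin

text \<open>Nodes of the search tree are encoded by the list of actions taken from the root;
  the actions available at any internal node are 0,...,b-1. A node is a list of length
  at most d with entries below b; leaves have length exactly d.\<close>

definition is_node :: "nat \<Rightarrow> nat \<Rightarrow> nat list \<Rightarrow> bool" where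
  "is_node b d s \<longleftrightarrow> length s \<le> d \<and> (\<forall>a\<in>set s. a < b)"

definition is_internal :: "nat \<Rightarrow> nat \<Rightarrow> nat list \<Rightarrow> bool" where
  "is_internal b d s \<longleftrightarrow> is_node b d s \<and> length s < d"

definition is_leaf :: "nat \<Rightarrow> nat \<Rightarrow> nat list \<Rightarrow> bool" where
  "is_leaf b d s \<longleftrightarrow> is_node b d s \<and> length s = d"

definition P_uni :: "nat \<Rightarrow> real" where
  "P_uni b = 1 / real b"

text \<open>P_opt of a leaf l given the explored set E; the k-th node on the path is take k l,
  and the action taken there is l ! k.\<close>
definition P_opt :: "nat \<Rightarrow> nat \<Rightarrow> (nat list \<Rightarrow> nat \<Rightarrow> real) \<Rightarrow> nat list set \<Rightarrow> nat list \<Rightarrow> real" where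
  "P_opt b d Pbest E l =
     (\<Prod>k<d. if take k l \<in> E then Pbest (take k l) (l ! k) else P_uni b)"

text \<open>A run of the greedy procedure (with arbitrary tie breaking): the sequence of actions
  chosen, where at each visited state the chosen action maximises Pbest over all b actions.\<close>
definition greedy_run :: "nat \<Rightarrow> nat \<Rightarrow> (nat list \<Rightarrow> nat \<Rightarrow> real) \<Rightarrow> nat list \<Rightarrow> bool" where
  "greedy_run b d Pbest g \<longleftrightarrow> length g = d \<and>
     (\<forall>k<d. g ! k < b \<and> (\<forall>a<b. Pbest (take k g) a \<le> Pbest (take k g) (g ! k)))"

definition greedy_explored :: "nat \<Rightarrow> nat list \<Rightarrow> nat list set" where
  "greedy_explored d g = {take k g | k. k < d}"

end

theory Submission
  imports Defs
begin

theorem theorem1: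
  fixes b d :: nat and Pbest :: "nat list \<Rightarrow> nat \<Rightarrow> real" and g :: "nat list"
  assumes "b \<ge> 1"
    and "\<And>s a. is_internal b d s \<Longrightarrow> a < b \<Longrightarrow> 0 \<le> Pbest s a \<and> Pbest s a \<le> 1"
    and "\<And>s. is_internal b d s \<Longrightarrow> (\<Sum>a<b. Pbest s a) = 1"
    and "greedy_run b d Pbest g"
  shows "is_leaf b d g \<and> greedy_explored d g \<subseteq> {s. is_internal b d s}
    \<and> card (greedy_explored d g) \<le> d
    \<and> (\<forall>l. is_leaf b d l \<longrightarrow>
          P_opt b d Pbest (greedy_explored d g) l \<le> P_opt b d Pbest (greedy_explored d g) g)"
proof -
  note gr = assms(4)[unfolded greedy_run_def]
  have len: "length g = d" using gr by simp
  have ent: "\<forall>a\<in>set g. a < b" using gr by (auto simp: in_set_conv_nth)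
  have leaf: "is_leaf b d g" using len ent by (simp add: is_leaf_def is_node_def)
  have int: "is_internal b d (take k g)" if "k < d" for k
    using that len ent by (auto simp: is_internal_def is_node_def dest: in_set_takeD)
  have sub: "greedy_explored d g \<subseteq> {s. is_internal b d s}"
    using int by (auto simp: greedy_explored_def)
  have E: "greedy_explored d g = (\<lambda>k. take k g) ` {..<d}"
    by (auto simp: greedy_explored_def)
  have card: "card (greedy_explored d g) \<le> d"
    unfolding E using card_image_le[of "{..<d}" "\<lambda>k. take k g"] by simp
  have maxge: "P_uni b \<le> Pbest (take k g) (g ! k)" if "k < d" for k
  proof -
    have "(\<Sum>a<b. Pbest (take k g) a) \<le> (\<Sum>a<b. Pbest (take k g) (g ! k))"
      by (rule sum_mono) (use gr that in auto)
    hence "1 \<le> real b * Pbest (take k g) (g ! k)" using assms(3)[OF int[OF that]] by simp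
    thus ?thesis using assms(1) by (simp add: P_uni_def field_simps)
  qed
  have main: "P_opt b d Pbest (greedy_explored d g) l \<le> P_opt b d Pbest (greedy_explored d g) g"
    if l: "is_leaf b d l" for l
  proof -
    have ll: "length l = d" and lent: "\<forall>a\<in>set l. a < b" using l by (auto simp: is_leaf_def is_node_def)
    show ?thesis unfolding P_opt_def
    proof (rule prod_mono)
      fix k assume k: "k \<in> {..<d}"
      hence kd: "k < d" by simp
      have gin: "take k g \<in> greedy_explored d g" using kd by (auto simp: greedy_explored_def)
      have lk: "l ! k < b" using lent ll kd by auto
      have iff: "take k l \<in> greedy_explored d g \<longleftrightarrow> take k l = take k g"
      proof
        assume "take k l \<in> greedy_explored d g"
        then obtain j where j: "j < d" "take k l = take j g" by (auto simp: greedy_explored_def)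
        have "length (take k l) = length (take j g)" using j(2) by (rule arg_cong)
        hence "j = k" using ll len kd j(1) by (simp add: min_def split: if_splits)
        thus "take k l = take k g" using j by simp
      qed (use gin in simp)
      have pu: "0 \<le> P_uni b" by (simp add: P_uni_def)
      have A: "0 \<le> (if take k l \<in> greedy_explored d g then Pbest (take k l) (l ! k) else P_uni b)"
        using assms(2)[OF int[OF kd] lk] iff pu by auto
      have B: "(if take k l \<in> greedy_explored d g then Pbest (take k l) (l ! k) else P_uni b)
          \<le> (if take k g \<in> greedy_explored d g then Pbest (take k g) (g ! k) else P_uni b)"
        using gin iff maxge[OF kd] gr kd lk by auto
      from A B show "0 \<le> (if take k l \<in> greedy_explored d g then Pbest (take k l) (l ! k) else P_uni b) \<and> (if take k l \<in> greedy_explored d g then Pbest (take k l) (l ! k) else P_uni b) \<le> (if take k g \<in> greedy_explored d g then Pbest (take k g) (g ! k) else P_uni b)" by (rule conjI)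
    qed
  qed
  show ?thesis using leaf sub card main by blast
qed

end
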